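(* Let $V$ be a proper $K$-poset with a single maximal node $m$ (and $\dim V\ge1$). If $d_V(m)>1$, then there exists a proper $K$-poset $U$ which is a splitting of $V$ at $m$, with associated set $\mathcal M\subseteq\max U$, such that $d_{L_U(m_i)}(m_i)=1$ for all $m_i\in\mathcal M$.
   Context: For a poset $U$: $L(u)=L_U(u)=\{v\le u\}$, $G(u)=\{v\ge u\}$, $L(u)^*$, $G(u)^*$ the same sets with $u$ removed; height of $u$ is $\dim L(u)$ (dimension = supremum of chain lengths); $H_i$ = set of height-$i$ nodes; $\operatorname{mub}A$ = minimal common upper bounds of $A$; $[b/c]$ = set of $u$ with $G(u)^*=\{b\}$, $L(u)^*=\{c\}$. A poset with $\dim\le2$ is a $K$-poset if $\min U$, $H_2$ are finite, $\operatorname{mub}\{u,v\}$ is finite for distinct minimal $u,v$, and $[u/w]$ is infinite whenever $u>v>w$ for some $v$; proper if $|[u/w]|\in\{0,|U|\}$ for all maximal $u$, minimal $w$. $\mathcal H_U$ = minimal nodes together with height-one nodes dominating at least two minimal nodes. For a poset $W$ with a single maximal node $n$ and $\dim W\ge1$: $\mathcal H_W^*=\mathcal H_W\setminus\{n\}$; $\Lambda_W\subseteq\mathcal H_W^*$ consists of the nodes of $H_1\cap\mathcal H_W^*$ together with all nodes $v\in\mathcal H_W^*$ with $G(v)\cap H_1\cap\mathcal H_W^*=\emptyset$; and $d_W(n)=|\Lambda_W|$. Splitting: for a poset $V$ with a maximal node $m$ of positive height, $U$ is a splitting of $V$ at $m$ if there are a finite nonempty $\mathcal M\subseteq\max U$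 of positive-height nodes and a surjective order-preserving $\varphi:U\to V$ with $\varphi^{-1}(m)=\mathcal M$, $|\varphi^{-1}(v)|=1$ for $v\ne m$, and such that whenever $\varphi(x')=x\le y$ there is $y'\ge x'$ with $\varphi(y')=y$. *)

theory Defs
  imports Main "HOL-Library.Extended_Nat" "HOL-Library.Equipollence"
begin

definition poset :: "'a set \<Rightarrow> ('a \<Rightarrow> 'a \<Rightarrow> bool) \<Rightarrow> bool" where
  "poset U le \<longleftrightarrow> (\<forall>x\<in>U. le x x) \<and> (\<forall>x\<in>U. \<forall>y\<in>U. le x y \<and> le y x \<longrightarrow> x = y)
     \<and> (\<forall>x\<in>U. \<forall>y\<in>U. \<forall>z\<in>U. le x y \<and> le y z \<longrightarrow> le x z)"

definition lessP :: "('a \<Rightarrow> 'a \<Rightarrow> bool) \<Rightarrow> 'a \<Rightarrow> 'a \<Rightarrow> bool" where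
  "lessP le x y \<longleftrightarrow> le x y \<and> x \<noteq> y"

definition is_chainP :: "('a \<Rightarrow> 'a \<Rightarrow> bool) \<Rightarrow> 'a set \<Rightarrow> bool" where
  "is_chainP le C \<longleftrightarrow> (\<forall>x\<in>C. \<forall>y\<in>C. le x y \<or> le y x)"

definition dimP :: "('a \<Rightarrow> 'a \<Rightarrow> bool) \<Rightarrow> 'a set \<Rightarrow> enat" where
  "dimP le A = (SUP C \<in> {C. C \<subseteq> A \<and> finite C \<and> C \<noteq> {} \<and> is_chainP le C}. enat (card C - 1))"

definition Lset :: "'a set \<Rightarrow> ('a \<Rightarrow> 'a \<Rightarrow> bool) \<Rightarrow> 'a \<Rightarrow> 'a set" where
  "Lset U le u = {v\<in>U. le v u}"

definition Gset :: "'a set \<Rightarrow> ('a \<Rightarrow> 'a \<Rightarrow> bool) \<Rightarrow> 'a \<Rightarrow> 'a set" where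
  "Gset U le u = {v\<in>U. le u v}"

definition height :: "'a set \<Rightarrow> ('a \<Rightarrow> 'a \<Rightarrow> bool) \<Rightarrow> 'a \<Rightarrow> enat" where
  "height U le u = dimP le (Lset U le u)"

definition Hset :: "'a set \<Rightarrow> ('a \<Rightarrow> 'a \<Rightarrow> bool) \<Rightarrow> nat \<Rightarrow> 'a set" where
  "Hset U le i = {u\<in>U. height U le u = enat i}"

definition minset :: "'a set \<Rightarrow> ('a \<Rightarrow> 'a \<Rightarrow> bool) \<Rightarrow> 'a set" where
  "minset U le = {u\<in>U. \<not> (\<exists>v\<in>U. lessP le v u)}"

definition maxset :: "'a set \<Rightarrow> ('a \<Rightarrow> 'a \<Rightarrow> bool) \<Rightarrow> 'a set" where
  "maxset U le = {u\<in>U. \<not> (\<exists>v\<in>U. lessP le u v)}"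

definition mub :: "'a set \<Rightarrow> ('a \<Rightarrow> 'a \<Rightarrow> bool) \<Rightarrow> 'a set \<Rightarrow> 'a set" where
  "mub U le A = {u\<in>U. (\<forall>a\<in>A. le a u) \<and> \<not> (\<exists>w\<in>U. (\<forall>a\<in>A. le a w) \<and> lessP le w u)}"

text \<open>[b/c]: nodes u with G(u)* = {b} and L(u)* = {c}.\<close>
definition bracket :: "'a set \<Rightarrow> ('a \<Rightarrow> 'a \<Rightarrow> bool) \<Rightarrow> 'a \<Rightarrow> 'a \<Rightarrow> 'a set" where
  "bracket U le b c = {u\<in>U. Gset U le u - {u} = {b} \<and> Lset U le u - {u} = {c}}"

definition K_poset :: "'a set \<Rightarrow> ('a \<Rightarrow> 'a \<Rightarrow> bool) \<Rightarrow> bool" where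
  "K_poset U le \<longleftrightarrow> poset U le \<and> dimP le U \<le> 2
     \<and> finite (minset U le) \<and> finite (Hset U le 2)
     \<and> (\<forall>u\<in>minset U le. \<forall>v\<in>minset U le. u \<noteq> v \<longrightarrow> finite (mub U le {u, v}))
     \<and> (\<forall>u\<in>U. \<forall>v\<in>U. \<forall>w\<in>U. lessP le v u \<and> lessP le w v \<longrightarrow> infinite (bracket U le u w))"

definition proper :: "'a set \<Rightarrow> ('a \<Rightarrow> 'a \<Rightarrow> bool) \<Rightarrow> bool" where
  "proper U le \<longleftrightarrow> (\<forall>u\<in>maxset U le. \<forall>w\<in>minset U le.
     bracket U le u w = {} \<or> bracket U le u w \<approx> U)"

definition calH :: "'a set \<Rightarrow> ('a \<Rightarrow> 'a \<Rightarrow> bool) \<Rightarrow> 'a set" where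
  "calH U le = minset U le \<union> {u\<in>Hset U le 1. \<exists>a\<in>minset U le. \<exists>b\<in>minset U le.
      a \<noteq> b \<and> le a u \<and> le b u}"

definition LambdaW :: "'a set \<Rightarrow> ('a \<Rightarrow> 'a \<Rightarrow> bool) \<Rightarrow> 'a \<Rightarrow> 'a set" where
  "LambdaW W le n = (Hset W le 1 \<inter> (calH W le - {n}))
     \<union> {v \<in> calH W le - {n}. Gset W le v \<inter> Hset W le 1 \<inter> (calH W le - {n}) = {}}"

definition dval :: "'a set \<Rightarrow> ('a \<Rightarrow> 'a \<Rightarrow> bool) \<Rightarrow> 'a \<Rightarrow> enat" where
  "dval W le n = (if finite (LambdaW W le n) then enat (card (LambdaW W le n)) else \<infinity>)"

definition splitting_with ::
  "'b set \<Rightarrow> ('b \<Rightarrow> 'b \<Rightarrow> bool) \<Rightarrow> 'a set \<Rightarrow> ('a \<Rightarrow> 'a \<Rightarrow> bool) \<Rightarrow> 'a \<Rightarrow> ('b \<Rightarrow> 'a) \<Rightarrow> 'b set \<Rightarrow> bool" where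
  "splitting_with U leU V leV m \<phi> M \<longleftrightarrow>
     m \<in> maxset V leV \<and> height V leV m > 0
     \<and> finite M \<and> M \<noteq> {} \<and> M \<subseteq> maxset U leU \<and> (\<forall>x\<in>M. height U leU x > 0)
     \<and> \<phi> ` U = V
     \<and> (\<forall>x\<in>U. \<forall>y\<in>U. leU x y \<longrightarrow> leV (\<phi> x) (\<phi> y))
     \<and> {x\<in>U. \<phi> x = m} = M
     \<and> (\<forall>v\<in>V. v \<noteq> m \<longrightarrow> card {x\<in>U. \<phi> x = v} = 1)
     \<and> (\<forall>x'\<in>U. \<forall>y\<in>V. leV (\<phi> x') y \<longrightarrow> (\<exists>y'\<in>U. leU x' y' \<and> \<phi> y' = y))"

end

theory Submission
  imports Defs
begin

lemma times_finite_eqpoll: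
  assumes "infinite S" "finite I" "I \<noteq> {}"
  shows "S \<times> I \<approx> S"
proof -
  have "I \<lesssim> S" using finite_lepoll_infinite assms by blast
  then obtain f where "inj_on f I" "f ` I \<subseteq> S" unfolding lepoll_def by blast
  then have "ordLeq2 (card_of I) (card_of S)"
    using card_of_ordLeq by blast
  then have "ordIso2 (card_of (S \<times> I)) (card_of S)"
    using card_of_Times_infinite[OF assms(1) assms(3)] by blast
  then show ?thesis using eqpoll_iff_card_of_ordIso by blast
qed
lemma infinite_Un_finite_eqpoll:
  assumes "infinite A" "finite B"
  shows "A \<union> B \<approx> A"
  using assms(2)
proof (induction B rule: finite_induct)
  case empty then show ?case by simp
next
  case (insert b B)
  have "insert b (A \<union> B) \<approx> A \<union> B"
    using assms(1) infinite_insert_eqpoll by (metis infinite_Un)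
  then show ?case using insert eqpoll_trans by fastforce
qed

lemma dim_gt_iff:
  "enat k < dimP le A \<longleftrightarrow> (\<exists>C. C \<subseteq> A \<and> finite C \<and> C \<noteq> {} \<and> is_chainP le C \<and> k + 1 < card C)"
  unfolding dimP_def less_SUP_iff by (simp add: less_diff_conv)

lemma dim_le_iff:
  "dimP le A \<le> enat k \<longleftrightarrow> (\<forall>C. C \<subseteq> A \<and> finite C \<and> C \<noteq> {} \<and> is_chainP le C \<longrightarrow> card C \<le> k + 1)"
  unfolding dimP_def SUP_le_iff by (simp add: le_diff_conv)

lemma dim_mono_map:
  assumes "\<And>C. C \<subseteq> A \<Longrightarrow> is_chainP leA C \<Longrightarrow> inj_on f C \<and> is_chainP leB (f ` C)"
    and "f ` A \<subseteq> B"
  shows "dimP leA A \<le> dimP leB B"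
  unfolding dimP_def
proof (rule SUP_mono)
  fix C assume "C \<in> {C. C \<subseteq> A \<and> finite C \<and> C \<noteq> {} \<and> is_chainP leA C}"
  then have C: "C \<subseteq> A" "finite C" "C \<noteq> {}" "is_chainP leA C" by auto
  then have "inj_on f C" "is_chainP leB (f ` C)" using assms(1) by auto
  moreover have "f ` C \<subseteq> B" using C assms(2) by auto
  ultimately show "\<exists>D\<in>{C. C \<subseteq> B \<and> finite C \<and> C \<noteq> {} \<and> is_chainP leB C}.
            enat (card C - 1) \<le> enat (card D - 1)"
    using C by (intro bexI[of _ "f ` C"]) (auto simp: card_image)
qed

lemma card2_obtain:
  assumes "finite C" "2 \<le> card C" obtains x y where "x \<in> C" "y \<in> C" "x \<noteq> y"
proof -
  obtain x where x: "x \<in> C" using assms by fastforce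
  have "card (C - {x}) \<ge> 1" using assms x by auto
  then have "C - {x} \<noteq> {}" by (metis card.empty not_one_le_zero)
  then obtain y where "y \<in> C - {x}" by blast
  then show ?thesis using that x by blast
qed

lemma card3_obtain:
  assumes "finite C" "3 \<le> card C" obtains x y z where "x \<in> C" "y \<in> C" "z \<in> C" "x \<noteq> y" "y \<noteq> z" "x \<noteq> z"
proof -
  obtain x where x: "x \<in> C" using assms by fastforce
  have "card (C - {x}) \<ge> 2" using assms x by auto
  then obtain y z where "y \<in> C - {x}" "z \<in> C - {x}" "y \<noteq> z" using card2_obtain[of "C - {x}"] assms by auto
  then show ?thesis using that x by blast
qed

context
  fixes P :: "'x set" and le :: "'x \<Rightarrow> 'x \<Rightarrow> bool"
  assumes po: "poset P le"
begin

lemma po_refl: "x \<in> P \<Longrightarrow> le x x" using po unfolding poset_def by blast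
lemma po_antisym: "x \<in> P \<Longrightarrow> y \<in> P \<Longrightarrow> le x y \<Longrightarrow> le y x \<Longrightarrow> x = y" using po unfolding poset_def by blast
lemma po_trans: "x \<in> P \<Longrightarrow> y \<in> P \<Longrightarrow> z \<in> P \<Longrightarrow> le x y \<Longrightarrow> le y z \<Longrightarrow> le x z" using po unfolding poset_def by blast

lemma less_trans1: assumes "x \<in> P" "y \<in> P" "z \<in> P" "lessP le x y" "le y z" shows "lessP le x z"
  using assms po_trans[of x y z] po_antisym[of x y] unfolding lessP_def by blast

lemma less_trans2: assumes "x \<in> P" "y \<in> P" "z \<in> P" "le x y" "lessP le y z" shows "lessP le x z"
  using assms po_trans[of x y z] po_antisym[of y z] unfolding lessP_def by blast

lemma dim_ge1_iff:
  assumes "A \<subseteq> P"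
  shows "enat 0 < dimP le A \<longleftrightarrow> (\<exists>x\<in>A. \<exists>y\<in>A. lessP le x y)"
proof
  assume "enat 0 < dimP le A"
  then obtain C where C: "C \<subseteq> A" "finite C" "is_chainP le C" "1 < card C" using dim_gt_iff[of 0 le A] by auto
  then obtain x y where "x \<in> C" "y \<in> C" "x \<noteq> y" using card2_obtain[of C] by auto
  then show "\<exists>x\<in>A. \<exists>y\<in>A. lessP le x y" using C unfolding is_chainP_def lessP_def by blast
next
  assume "\<exists>x\<in>A. \<exists>y\<in>A. lessP le x y"
  then obtain x y where "x \<in> A" "y \<in> A" "lessP le x y" by blast
  then show "enat 0 < dimP le A" unfolding dim_gt_iff[of 0]
    using assms po_refl by (intro exI[of _ "{x,y}"]) (auto simp: is_chainP_def lessP_def)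
qed

lemma order3:
  assumes "x \<in> P" "y \<in> P" "z \<in> P" "x \<noteq> y" "y \<noteq> z" "x \<noteq> z"
    "le x y \<or> le y x" "le y z \<or> le z y" "le x z \<or> le z x"
  shows "\<exists>a\<in>{x,y,z}. \<exists>b\<in>{x,y,z}. \<exists>c\<in>{x,y,z}. lessP le a b \<and> lessP le b c"
proof -
  have "(le x y \<and> le y z) \<or> (le x z \<and> le z y) \<or> (le y x \<and> le x z) \<or> (le y z \<and> le z x)
     \<or> (le z x \<and> le x y) \<or> (le z y \<and> le y x)"
    using assms(7-9) po_trans[OF assms(1,2,3)] po_trans[OF assms(1,3,2)] po_trans[OF assms(2,1,3)]
      po_trans[OF assms(2,3,1)] po_trans[OF assms(3,1,2)] po_trans[OF assms(3,2,1)]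
      po_antisym[OF assms(1,2)] po_antisym[OF assms(1,3)] po_antisym[OF assms(2,3)] assms(4-6)
    by blast
  then show ?thesis using assms(4-6) unfolding lessP_def by blast
qed

lemma dim_ge2_iff:
  assumes "A \<subseteq> P"
  shows "enat 1 < dimP le A \<longleftrightarrow> (\<exists>x\<in>A. \<exists>y\<in>A. \<exists>z\<in>A. lessP le x y \<and> lessP le y z)"
proof
  assume "enat 1 < dimP le A"
  then obtain C where C: "C \<subseteq> A" "finite C" "is_chainP le C" "1 + 1 < card C" using dim_gt_iff[of 1 le A] by blast
  have "3 \<le> card C" using C(4) by simp
  then obtain x y z where xyz: "x \<in> C" "y \<in> C" "z \<in> C" "x \<noteq> y" "y \<noteq> z" "x \<noteq> z"
    using card3_obtain[OF C(2)] by blast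
  then have "\<exists>a\<in>{x,y,z}. \<exists>b\<in>{x,y,z}. \<exists>c\<in>{x,y,z}. lessP le a b \<and> lessP le b c"
    using C assms by (intro order3) (auto simp: is_chainP_def)
  then show "\<exists>x\<in>A. \<exists>y\<in>A. \<exists>z\<in>A. lessP le x y \<and> lessP le y z" using xyz C by blast
next
  assume "\<exists>x\<in>A. \<exists>y\<in>A. \<exists>z\<in>A. lessP le x y \<and> lessP le y z"
  then obtain x y z where xyz: "x \<in> A" "y \<in> A" "z \<in> A" "lessP le x y" "lessP le y z" by blast
  have P: "x \<in> P" "y \<in> P" "z \<in> P" using xyz assms by auto
  have xz: "lessP le x z" using less_trans1[OF P] xyz unfolding lessP_def by blast
  have "card {x,y,z} = 3" using xyz xz unfolding lessP_def by auto
  moreover have "is_chainP le {x,y,z}" unfolding is_chainP_def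
  proof (intro ballI)
    fix p q assume "p \<in> {x,y,z}" "q \<in> {x,y,z}"
    then show "le p q \<or> le q p" using xyz xz po_refl[OF P(1)] po_refl[OF P(2)] po_refl[OF P(3)]
      unfolding lessP_def by auto
  qed
  ultimately show "enat 1 < dimP le A" unfolding dim_gt_iff[of 1]
    using xyz by (intro exI[of _ "{x,y,z}"]) auto
qed

lemma dim_4chain:
  assumes "A \<subseteq> P" "a \<in> A" "b \<in> A" "c \<in> A" "d \<in> A"
    "lessP le a b" "lessP le b c" "lessP le c d"
  shows "enat 2 < dimP le A"
proof -
  have P: "a \<in> P" "b \<in> P" "c \<in> P" "d \<in> P" using assms by auto
  have ac: "lessP le a c" using less_trans1[OF P(1,2,3)] assms unfolding lessP_def by blast
  have bd: "lessP le b d" using less_trans1[OF P(2,3,4)] assms unfolding lessP_def by blast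
  have ad: "lessP le a d" using less_trans1[OF P(1,3,4)] assms ac unfolding lessP_def by blast
  have "card {a,b,c,d} = 4" using assms ac bd ad unfolding lessP_def by auto
  moreover have "is_chainP le {a,b,c,d}" unfolding is_chainP_def
  proof (intro ballI)
    fix p q assume "p \<in> {a,b,c,d}" "q \<in> {a,b,c,d}"
    then show "le p q \<or> le q p" using assms ac bd ad po_refl[OF P(1)] po_refl[OF P(2)] po_refl[OF P(3)] po_refl[OF P(4)]
      unfolding lessP_def by auto
  qed
  ultimately show ?thesis unfolding dim_gt_iff[of 2]
    using assms by (intro exI[of _ "{a,b,c,d}"]) auto
qed

lemma Lset_sub: "Lset P le u \<subseteq> P" unfolding Lset_def by auto

lemma height0_iff:
  assumes "u \<in> P"
  shows "height P le u = 0 \<longleftrightarrow> \<not> (\<exists>v\<in>P. lessP le v u)"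
proof -
  have "height P le u = 0 \<longleftrightarrow> \<not> enat 0 < height P le u" by (simp add: zero_enat_def[symmetric])
  also have "\<dots> \<longleftrightarrow> \<not> (\<exists>x\<in>Lset P le u. \<exists>y\<in>Lset P le u. lessP le x y)"
    unfolding height_def using dim_ge1_iff[OF Lset_sub] by simp
  also have "\<dots> \<longleftrightarrow> \<not> (\<exists>v\<in>P. lessP le v u)"
  proof
    assume "\<not> (\<exists>x\<in>Lset P le u. \<exists>y\<in>Lset P le u. lessP le x y)"
    moreover have "u \<in> Lset P le u" using assms po_refl unfolding Lset_def by auto
    ultimately show "\<not> (\<exists>v\<in>P. lessP le v u)" unfolding Lset_def lessP_def by auto
  next
    assume a: "\<not> (\<exists>v\<in>P. lessP le v u)"
    show "\<not> (\<exists>x\<in>Lset P le u. \<exists>y\<in>Lset P le u. lessP le x y)"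
    proof
      assume "\<exists>x\<in>Lset P le u. \<exists>y\<in>Lset P le u. lessP le x y"
      then obtain x y where "x \<in> P" "y \<in> P" "le y u" "lessP le x y" unfolding Lset_def by auto
      then have "lessP le x u" using less_trans1[of x y u] assms by blast
      then show False using a \<open>x \<in> P\<close> by blast
    qed
  qed
  finally show ?thesis .
qed

lemma height_gt1_iff:
  assumes "u \<in> P"
  shows "enat 1 < height P le u \<longleftrightarrow> (\<exists>v\<in>P. \<exists>w\<in>P. lessP le w v \<and> lessP le v u)"
proof -
  have "enat 1 < height P le u \<longleftrightarrow> (\<exists>x\<in>Lset P le u. \<exists>y\<in>Lset P le u. \<exists>z\<in>Lset P le u. lessP le x y \<and> lessP le y z)"
    unfolding height_def using dim_ge2_iff[OF Lset_sub] by simp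
  also have "\<dots> \<longleftrightarrow> (\<exists>v\<in>P. \<exists>w\<in>P. lessP le w v \<and> lessP le v u)"
  proof
    assume "\<exists>x\<in>Lset P le u. \<exists>y\<in>Lset P le u. \<exists>z\<in>Lset P le u. lessP le x y \<and> lessP le y z"
    then obtain x y z where "x \<in> P" "y \<in> P" "z \<in> P" "le z u" "lessP le x y" "lessP le y z"
      unfolding Lset_def by blast
    then show "\<exists>v\<in>P. \<exists>w\<in>P. lessP le w v \<and> lessP le v u" using assms less_trans1[of y z u] by blast
  next
    assume "\<exists>v\<in>P. \<exists>w\<in>P. lessP le w v \<and> lessP le v u"
    then obtain v w where vw: "v \<in> P" "w \<in> P" "lessP le w v" "lessP le v u" by blast
    then have "le w u" using po_trans[of w v u] assms unfolding lessP_def by blast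
    then show "\<exists>x\<in>Lset P le u. \<exists>y\<in>Lset P le u. \<exists>z\<in>Lset P le u. lessP le x y \<and> lessP le y z"
      using vw assms po_refl[of u] unfolding Lset_def lessP_def by blast
  qed
  finally show ?thesis .
qed

lemma height1_iff:
  assumes "u \<in> P"
  shows "height P le u = 1 \<longleftrightarrow> (\<exists>v\<in>P. lessP le v u) \<and> \<not> (\<exists>v\<in>P. \<exists>w\<in>P. lessP le w v \<and> lessP le v u)"
proof -
  have "height P le u = 1 \<longleftrightarrow> height P le u \<noteq> 0 \<and> \<not> enat 1 < height P le u"
    by (cases "height P le u") (auto simp: one_enat_def zero_enat_def)
  then show ?thesis using height0_iff[OF assms] height_gt1_iff[OF assms] by blast
qed

lemma height_pos_iff:
  assumes "u \<in> P"
  shows "height P le u > 0 \<longleftrightarrow> (\<exists>v\<in>P. lessP le v u)"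
  using height0_iff[OF assms] by (simp add: zero_less_iff_neq_zero)

end




locale Vset =
  fixes V :: "'a set" and le :: "'a \<Rightarrow> 'a \<Rightarrow> bool" and m :: 'a
  assumes K: "K_poset V le" and pr: "proper V le" and mx: "maxset V le = {m}"
    and d1: "dimP le V \<ge> 1"
begin

lemma Kc: "poset V le" "dimP le V \<le> 2" "finite (minset V le)" "finite (Hset V le 2)"
  "\<forall>u\<in>minset V le. \<forall>v\<in>minset V le. u \<noteq> v \<longrightarrow> finite (mub V le {u, v})"
  "\<forall>u\<in>V. \<forall>v\<in>V. \<forall>w\<in>V. lessP le v u \<and> lessP le w v \<longrightarrow> infinite (bracket V le u w)"
  using K unfolding K_poset_def by auto
lemma po: "poset V le" by (rule Kc(1))
lemma dim2: "dimP le V \<le> 2" by (rule Kc(2))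

lemma refl: "x \<in> V \<Longrightarrow> le x x" using po_refl[OF po] .
lemma antisym: "x \<in> V \<Longrightarrow> y \<in> V \<Longrightarrow> le x y \<Longrightarrow> le y x \<Longrightarrow> x = y" using po_antisym[OF po] .
lemma trans: "x \<in> V \<Longrightarrow> y \<in> V \<Longrightarrow> z \<in> V \<Longrightarrow> le x y \<Longrightarrow> le y z \<Longrightarrow> le x z" using po_trans[OF po] .

lemma no4:
  assumes "a \<in> V" "b \<in> V" "c \<in> V" "d \<in> V" "lessP le a b" "lessP le b c" "lessP le c d"
  shows False
proof -
  have "enat 2 < dimP le V" using dim_4chain[OF po, of V a b c d] assms by blast
  then show False using dim2 by (simp add: numeral_eq_enat)
qed

lemma mV: "m \<in> V" using mx unfolding maxset_def by blast
lemma m_top: "v \<in> V \<Longrightarrow> \<not> lessP le m v" using mx unfolding maxset_def by blast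

lemma le_m: assumes "x \<in> V" shows "le x m"
proof (rule ccontr)
  assume nx: "\<not> le x m"
  have step: "\<exists>y\<in>V. lessP le u y \<and> \<not> le y m" if u: "u \<in> V" "\<not> le u m" for u
  proof -
    have "u \<noteq> m" using u refl by blast
    then have "u \<notin> maxset V le" using mx by blast
    then obtain y where y: "y \<in> V" "lessP le u y" using u unfolding maxset_def by blast
    have "\<not> le y m" using trans[of u y m] y u mV unfolding lessP_def by blast
    then show ?thesis using y by blast
  qed
  obtain y where y: "y \<in> V" "lessP le x y" "\<not> le y m" using step assms nx by blast
  obtain z where z: "z \<in> V" "lessP le y z" "\<not> le z m" using step y by blast
  obtain t where t: "t \<in> V" "lessP le z t" "\<not> le t m" using step z by blast
  show False using no4[of x y z t] assms y z t by blast
qed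

definition "mins = minset V le"

lemma mins_sub: "mins \<subseteq> V" unfolding mins_def minset_def by blast
lemma fin_mins: "finite mins" using Kc(3) unfolding mins_def .
lemma minsI: "x \<in> V \<Longrightarrow> \<not> (\<exists>v\<in>V. lessP le v x) \<Longrightarrow> x \<in> mins" unfolding mins_def minset_def by blast
lemma minsD: "a \<in> mins \<Longrightarrow> x \<in> V \<Longrightarrow> le x a \<Longrightarrow> x = a" unfolding mins_def minset_def lessP_def by blast
lemma notminsD: "x \<in> V \<Longrightarrow> x \<notin> mins \<Longrightarrow> \<exists>v\<in>V. lessP le v x" unfolding mins_def minset_def by blast

lemma below_min:
  assumes "x \<in> V" "y \<in> V" "lessP le x y" "y \<noteq> m"
  shows "x \<in> mins"
proof (rule ccontr)
  assume "x \<notin> mins"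
  then obtain z where z: "z \<in> V" "lessP le z x" using notminsD assms by blast
  have "lessP le y m" using le_m assms unfolding lessP_def by blast
  then show False using no4[of z x y m] z assms mV by blast
qed

lemma m_notmin: "m \<notin> mins"
proof
  assume mm: "m \<in> mins"
  have "enat 0 < dimP le V" using d1 zero_enat_def by (metis order_less_le_trans zero_less_one)
  then obtain x y where xy: "x \<in> V" "y \<in> V" "lessP le x y" using dim_ge1_iff[OF po, of V] by blast
  then have "lessP le x m" using less_trans1[OF po xy(1,2) mV xy(3)] le_m by blast
  then show False using minsD[OF mm xy(1)] unfolding lessP_def by blast
qed

lemma exmin: assumes "x \<in> V" shows "\<exists>w\<in>mins. le w x"
proof (cases "x \<in> mins")
  case True then show ?thesis using refl assms by blast
next
  case False
  then obtain y where y: "y \<in> V" "lessP le y x" using notminsD assms by blast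
  show ?thesis
  proof (cases "x = m")
    case False
    then have "y \<in> mins" using below_min y assms by blast
    then show ?thesis using y unfolding lessP_def by blast
  next
    case True
    show ?thesis
    proof (cases "y \<in> mins")
      case True then show ?thesis using y unfolding lessP_def by blast
    next
      case False
      then obtain z where z: "z \<in> V" "lessP le z y" using notminsD y by blast
      have "y \<noteq> m" using y \<open>x = m\<close> unfolding lessP_def by blast
      then have "z \<in> mins" using below_min z y by blast
      moreover have "le z x" using trans[of z y x] z y assms unfolding lessP_def by blast
      ultimately show ?thesis by blast
    qed
  qed
qed

definition "hubs = {h\<in>V. h \<noteq> m \<and> h \<notin> mins \<and> (\<exists>a\<in>mins. \<exists>b\<in>mins. a \<noteq> b \<and> le a h \<and> le b h)}"
definition "NN = {x\<in>V. x \<noteq> m \<and> x \<notin> mins \<and> x \<notin> hubs}"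
definition "Lam = hubs \<union> {w\<in>mins. \<not> (\<exists>h\<in>hubs. le w h)}"
definition "S w = {x\<in>NN. le w x}"

lemma hubs_fin: "finite hubs"
proof -
  let ?B = "\<Union>((\<lambda>(a,b). mub V le {a,b}) ` {(a,b). a \<in> mins \<and> b \<in> mins \<and> a \<noteq> b})"
  have "finite {(a,b). a \<in> mins \<and> b \<in> mins \<and> a \<noteq> b}"
    by (rule finite_subset[of _ "mins \<times> mins"]) (auto simp: fin_mins)
  moreover have "\<forall>a\<in>mins. \<forall>b\<in>mins. a \<noteq> b \<longrightarrow> finite (mub V le {a, b})"
    using Kc(5) unfolding mins_def .
  ultimately have fB: "finite ?B" by auto
  have "hubs \<subseteq> ?B"
  proof
    fix h assume h: "h \<in> hubs"
    then obtain a b where ab: "a \<in> mins" "b \<in> mins" "a \<noteq> b" "le a h" "le b h" "h \<in> V" "h \<noteq> m"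
      unfolding hubs_def by blast
    have "h \<in> mub V le {a,b}"
      unfolding mub_def
    proof (intro CollectI conjI)
      show "h \<in> V" "\<forall>c\<in>{a, b}. le c h" using ab by auto
      show "\<not> (\<exists>w\<in>V. (\<forall>c\<in>{a, b}. le c w) \<and> lessP le w h)"
      proof
        assume "\<exists>w\<in>V. (\<forall>c\<in>{a, b}. le c w) \<and> lessP le w h"
        then obtain w where w: "w \<in> V" "le a w" "le b w" "lessP le w h" by blast
        then have "w \<in> mins" using below_min ab by blast
        then show False using minsD[of w a] minsD[of w b] w ab mins_sub by blast
      qed
    qed
    then show "h \<in> ?B" using ab by blast
  qed
  then show ?thesis using fB finite_subset by blast
qed

lemma Lam_fin: "finite Lam" unfolding Lam_def using hubs_fin fin_mins by auto
lemma Lam_sub: "Lam \<subseteq> V - {m}" unfolding Lam_def hubs_def using mins_sub m_notmin by auto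
lemma hubs_sub: "hubs \<subseteq> V - {m}" unfolding hubs_def by auto
lemma NN_Lam: "x \<in> NN \<Longrightarrow> x \<notin> Lam" unfolding NN_def Lam_def by auto

lemma Lam_cover_min: assumes "w \<in> mins" shows "\<exists>l\<in>Lam. le w l"
proof (cases "\<exists>h\<in>hubs. le w h")
  case True then show ?thesis unfolding Lam_def by blast
next
  case False
  then have "w \<in> Lam" using assms unfolding Lam_def by blast
  then show ?thesis using refl assms mins_sub by blast
qed

lemma Lam_ne: "Lam \<noteq> {}"
proof -
  obtain w where "w \<in> mins" using exmin mV by blast
  then show ?thesis using Lam_cover_min by blast
qed

lemma NN_unique:
  assumes "x \<in> NN" "a \<in> mins" "b \<in> mins" "le a x" "le b x" shows "a = b"
  using assms unfolding NN_def hubs_def by blast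

lemma NN_min: assumes "x \<in> NN" shows "\<exists>w\<in>mins. le w x"
  using exmin assms unfolding NN_def by blast

lemma NN_below: assumes "x \<in> NN" "y \<in> V" "lessP le y x" shows "y \<in> mins"
  using below_min assms unfolding NN_def by blast

lemma NN_above: assumes "x \<in> NN" "y \<in> V" "lessP le x y" shows "y = m"
  using below_min assms unfolding NN_def by blast

lemma S_sub: assumes "x \<in> S w" "w \<in> mins" shows "x \<in> bracket V le m w"
proof -
  have x: "x \<in> NN" "le w x" using assms unfolding S_def by auto
  have xV: "x \<in> V" "x \<noteq> m" "x \<notin> mins" using x unfolding NN_def by auto
  have "Gset V le x - {x} = {m}"
  proof
    show "Gset V le x - {x} \<subseteq> {m}"
    proof
      fix y assume "y \<in> Gset V le x - {x}"
      then have "y \<in> V" "lessP le x y" unfolding Gset_def lessP_def by auto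
      then show "y \<in> {m}" using NN_above[OF x(1)] by blast
    qed
    show "{m} \<subseteq> Gset V le x - {x}" using xV mV le_m unfolding Gset_def by auto
  qed
  moreover have "Lset V le x - {x} = {w}"
  proof
    show "Lset V le x - {x} \<subseteq> {w}"
    proof
      fix y assume "y \<in> Lset V le x - {x}"
      then have y: "y \<in> V" "lessP le y x" unfolding Lset_def lessP_def by auto
      then have "y \<in> mins" using NN_below x by blast
      then have "y = w" using NN_unique[OF x(1) _ assms(2)] y x unfolding lessP_def by blast
      then show "y \<in> {w}" by simp
    qed
    have "w \<noteq> x" using xV assms(2) by blast
    then show "{w} \<subseteq> Lset V le x - {x}" using x assms(2) mins_sub unfolding Lset_def by auto
  qed
  ultimately show "x \<in> bracket V le m w" using xV unfolding bracket_def by blast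
qed

lemma bracket_sub: assumes "u \<in> bracket V le m w" "w \<in> mins" shows "u \<in> S w"
proof -
  have u: "u \<in> V" "Gset V le u - {u} = {m}" "Lset V le u - {u} = {w}"
    using assms unfolding bracket_def by auto
  have "m \<in> Gset V le u - {u}" using u(2) by simp
  then have um: "u \<noteq> m" by auto
  have "w \<in> Lset V le u - {u}" using u(3) by simp
  then have wu: "le w u" "w \<noteq> u" unfolding Lset_def by auto
  have un: "u \<notin> mins" using minsD[of u w] wu assms(2) mins_sub by blast
  have "u \<notin> hubs"
  proof
    assume "u \<in> hubs"
    then obtain a b where ab: "a \<in> mins" "b \<in> mins" "a \<noteq> b" "le a u" "le b u" unfolding hubs_def by blast
    have "a \<noteq> u" "b \<noteq> u" using ab un by auto
    then have "a \<in> Lset V le u - {u}" "b \<in> Lset V le u - {u}" using ab mins_sub unfolding Lset_def by auto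
    then have "a \<in> {w}" "b \<in> {w}" using u(3) by simp_all
    then show False using ab(3) by simp
  qed
  then show "u \<in> S w" using u(1) um un wu unfolding S_def NN_def by blast
qed

lemma S_bracket: assumes w: "w \<in> mins" shows "S w = bracket V le m w"
  using S_sub bracket_sub w by blast

lemma S_inf:
  assumes w: "w \<in> mins" and ne: "S w \<noteq> {}"
  shows "infinite (S w)" "S w \<approx> V"
proof -
  obtain x where x: "x \<in> S w" using ne by blast
  then have xN: "x \<in> NN" "le w x" unfolding S_def by auto
  have xV: "x \<in> V" "x \<noteq> m" "x \<notin> mins" using xN unfolding NN_def by auto
  have "lessP le w x" using xN xV w by (auto simp: lessP_def)
  moreover have "lessP le x m" using le_m xV unfolding lessP_def by blast
  ultimately have "infinite (bracket V le m w)"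
    using Kc(6) mV xV w mins_sub by blast
  then show "infinite (S w)" using S_bracket w by simp
  have "m \<in> maxset V le" "w \<in> minset V le" using mx w unfolding mins_def by auto
  then have "bracket V le m w = {} \<or> bracket V le m w \<approx> V" using pr unfolding proper_def by blast
  then show "S w \<approx> V" using S_bracket w ne by simp
qed


lemma tgt_exists:
  "\<exists>tgt. (\<forall>x\<in>NN. tgt x \<in> Lam \<and> (\<forall>w\<in>mins. le w x \<longrightarrow> le w (tgt x)))
      \<and> (\<forall>w\<in>mins. \<forall>l\<in>Lam. le w l \<longrightarrow> S w \<noteq> {} \<longrightarrow> {x\<in>S w. tgt x = l} \<approx> S w)"
proof -
  define I where "I w = {l\<in>Lam. le w l}" for w
  have I: "finite (I w)" "I w \<noteq> {}" if "w \<in> mins" for w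
    using Lam_fin Lam_cover_min[OF that] unfolding I_def by auto
  have "\<forall>w. \<exists>g. w \<in> mins \<and> S w \<noteq> {} \<longrightarrow> bij_betw g (S w \<times> I w) (S w)"
  proof
    fix w
    show "\<exists>g. w \<in> mins \<and> S w \<noteq> {} \<longrightarrow> bij_betw g (S w \<times> I w) (S w)"
    proof (cases "w \<in> mins \<and> S w \<noteq> {}")
      case True
      then have wm: "w \<in> mins" "S w \<noteq> {}" by auto
      have "S w \<times> I w \<approx> S w" using times_finite_eqpoll[OF S_inf(1)[OF wm] I[OF wm(1)]] .
      then obtain g where "bij_betw g (S w \<times> I w) (S w)" unfolding eqpoll_def by blast
      then show ?thesis by blast
    next
      case False
      show ?thesis by (rule exI[of _ undefined]) (use False in blast)
    qed
  qed
  then have "\<exists>G. \<forall>w. w \<in> mins \<and> S w \<noteq> {} \<longrightarrow> bij_betw (G w) (S w \<times> I w) (S w)"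
    by (rule choice)
  then obtain G where G0: "\<forall>w. w \<in> mins \<and> S w \<noteq> {} \<longrightarrow> bij_betw (G w) (S w \<times> I w) (S w)"
    by (elim exE)
  have G: "bij_betw (G w) (S w \<times> I w) (S w)" if "w \<in> mins" "S w \<noteq> {}" for w
    using G0 that by simp
  define mw where "mw x = (SOME w. w \<in> mins \<and> le w x)" for x
  have mw: "mw x \<in> mins" "le (mw x) x" if "x \<in> NN" for x
    using someI_ex[OF NN_min[OF that, unfolded Bex_def]] unfolding mw_def by auto
  have mw_eq: "mw x = w" if "x \<in> NN" "w \<in> mins" "le w x" for x w
    using NN_unique[OF that(1) mw(1)[OF that(1)] that(2) mw(2)[OF that(1)] that(3)] .
  define tgt where "tgt x = snd (inv_into (S (mw x) \<times> I (mw x)) (G (mw x)) x)" for x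
  have inv_in: "inv_into (S (mw x) \<times> I (mw x)) (G (mw x)) x \<in> S (mw x) \<times> I (mw x)"
    and inv_eq: "G (mw x) (inv_into (S (mw x) \<times> I (mw x)) (G (mw x)) x) = x"
    if x: "x \<in> NN" for x
  proof -
    have xs: "x \<in> S (mw x)" using mw[OF x] x unfolding S_def by blast
    then have b: "bij_betw (G (mw x)) (S (mw x) \<times> I (mw x)) (S (mw x))" using G mw[OF x] by blast
    then have "x \<in> G (mw x) ` (S (mw x) \<times> I (mw x))" using xs unfolding bij_betw_def by blast
    then show "inv_into (S (mw x) \<times> I (mw x)) (G (mw x)) x \<in> S (mw x) \<times> I (mw x)"
      "G (mw x) (inv_into (S (mw x) \<times> I (mw x)) (G (mw x)) x) = x"
      by (auto intro: inv_into_into f_inv_into_f)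
  qed
  have P1: "\<forall>x\<in>NN. tgt x \<in> Lam \<and> (\<forall>w\<in>mins. le w x \<longrightarrow> le w (tgt x))"
  proof
    fix x assume x: "x \<in> NN"
    have "tgt x \<in> I (mw x)" using inv_in[OF x] unfolding tgt_def by auto
    then have "tgt x \<in> Lam" "le (mw x) (tgt x)" unfolding I_def by auto
    then show "tgt x \<in> Lam \<and> (\<forall>w\<in>mins. le w x \<longrightarrow> le w (tgt x))"
      using mw_eq[OF x] by auto
  qed
  have P2: "{x\<in>S w. tgt x = l} \<approx> S w"
    if w: "w \<in> mins" and l: "l \<in> Lam" "le w l" and ne: "S w \<noteq> {}" for w l
  proof -
    have b: "bij_betw (G w) (S w \<times> I w) (S w)" using G w ne by blast
    have lI: "l \<in> I w" using l unfolding I_def by auto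
    have "{x\<in>S w. tgt x = l} = G w ` (S w \<times> {l})"
    proof
      show "{x\<in>S w. tgt x = l} \<subseteq> G w ` (S w \<times> {l})"
      proof
        fix x assume "x \<in> {x\<in>S w. tgt x = l}"
        then have x: "x \<in> NN" "le w x" "tgt x = l" unfolding S_def by auto
        have e: "mw x = w" using mw_eq[OF x(1) w x(2)] .
        let ?p = "inv_into (S w \<times> I w) (G w) x"
        have "?p \<in> S w \<times> I w" "G w ?p = x" using inv_in[OF x(1)] inv_eq[OF x(1)] e by auto
        moreover have "snd ?p = l" using x(3) e unfolding tgt_def by simp
        ultimately have "?p \<in> S w \<times> {l}" by (cases ?p) auto
        then show "x \<in> G w ` (S w \<times> {l})" using \<open>G w ?p = x\<close> by (metis image_eqI)
      qed
      show "G w ` (S w \<times> {l}) \<subseteq> {x\<in>S w. tgt x = l}"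
      proof
        fix x assume "x \<in> G w ` (S w \<times> {l})"
        then obtain s where s: "s \<in> S w" "x = G w (s, l)" by blast
        have pin: "(s, l) \<in> S w \<times> I w" using s lI by auto
        then have xs: "x \<in> S w" using b s unfolding bij_betw_def by blast
        then have xN: "x \<in> NN" "le w x" unfolding S_def by auto
        have e: "mw x = w" using mw_eq[OF xN(1) w xN(2)] .
        have "inv_into (S w \<times> I w) (G w) x = (s, l)"
          using inv_into_f_f[of "G w" "S w \<times> I w" "(s,l)"] b pin s unfolding bij_betw_def by simp
        then have "tgt x = l" unfolding tgt_def e by simp
        then show "x \<in> {x\<in>S w. tgt x = l}" using xs by blast
      qed
    qed
    moreover have "G w ` (S w \<times> {l}) \<approx> S w \<times> {l}"
      by (rule inj_on_image_eqpoll_self) (use b lI in \<open>auto simp: bij_betw_def intro: inj_on_subset\<close>)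
    moreover have "S w \<times> {l} \<approx> S w"
      using eqpoll_trans[OF times_commute_eqpoll times_singleton_eqpoll] .
    ultimately show ?thesis using eqpoll_trans by simp
  qed
  show ?thesis using P1 P2 by blast
qed

end



lemma poset_subset: "poset P le \<Longrightarrow> Q \<subseteq> P \<Longrightarrow> poset Q le"
  unfolding poset_def by blast

locale Uset = Vset +
  fixes tgt :: "'a \<Rightarrow> 'a"
  assumes tgt1: "x \<in> NN \<Longrightarrow> tgt x \<in> Lam"
    and tgt2: "x \<in> NN \<Longrightarrow> w \<in> mins \<Longrightarrow> le w x \<Longrightarrow> le w (tgt x)"
    and tgt3: "w \<in> mins \<Longrightarrow> l \<in> Lam \<Longrightarrow> le w l \<Longrightarrow> S w \<noteq> {} \<Longrightarrow> {x\<in>S w. tgt x = l} \<approx> S w"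
begin

definition "D l = {x\<in>V. x \<noteq> m \<and> le x l} \<union> {x\<in>NN. tgt x = l}"
definition "U = (\<lambda>x. (x, 0::nat)) ` (V - {m}) \<union> (\<lambda>l. (l, 1)) ` Lam"
definition leU :: "'a \<times> nat \<Rightarrow> 'a \<times> nat \<Rightarrow> bool" where "leU p q = (if snd p = 0 \<and> snd q = 0 then le (fst p) (fst q)
   else if snd p = 0 \<and> snd q = 1 then fst p \<in> D (fst q) else p = q)"
definition phi :: "'a \<times> nat \<Rightarrow> 'a" where "phi p = (if snd p = 0 then fst p else m)"
definition "M = (\<lambda>l. (l, 1::nat)) ` Lam"

lemma leU_simps[simp]:
  "leU (x, 0) (y, 0) = le x y"
  "leU (x, 0) (l, 1) = (x \<in> D l)"
  "leU (l, 1) (y, 0) = False"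
  "leU (l, 1) (l', 1) = (l = l')"
  "leU (x, 0) (l, Suc 0) = (x \<in> D l)"
  "leU (l, Suc 0) (y, 0) = False"
  "leU (l, Suc 0) (l', Suc 0) = (l = l')"
  unfolding leU_def by auto

lemma lessU_simps[simp]:
  "lessP leU (x, 0) (y, 0) = lessP le x y"
  "lessP leU (x, 0) (l, 1) = (x \<in> D l)"
  "lessP leU (l, 1) (y, 0) = False"
  "lessP leU (l, 1) (l', 1) = False"
  "lessP leU (x, 0) (l, Suc 0) = (x \<in> D l)"
  "lessP leU (l, Suc 0) (y, 0) = False"
  "lessP leU (l, Suc 0) (l', Suc 0) = False"
  unfolding lessP_def by auto

lemma U_E:
  assumes "p \<in> U"
  obtains (o) x where "p = (x, 0)" "x \<in> V" "x \<noteq> m"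
    | (c) l where "p = (l, 1)" "l \<in> Lam"
  using assms unfolding U_def by blast

lemma U_o: "x \<in> V \<Longrightarrow> x \<noteq> m \<Longrightarrow> (x, 0) \<in> U" unfolding U_def by blast
lemma U_c: "l \<in> Lam \<Longrightarrow> (l, 1) \<in> U" unfolding U_def by blast
lemma U_o_iff: "(x, 0) \<in> U \<longleftrightarrow> x \<in> V \<and> x \<noteq> m" unfolding U_def by auto
lemma U_c_iff: "(l, 1) \<in> U \<longleftrightarrow> l \<in> Lam" unfolding U_def by auto

lemma D_sub: "x \<in> D l \<Longrightarrow> x \<in> V \<and> x \<noteq> m" unfolding D_def NN_def by auto

lemma D_down:
  assumes y: "y \<in> D l" and x: "x \<in> V" "le x y" and l: "l \<in> Lam"
  shows "x \<in> D l"
proof -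
  have yV: "y \<in> V" "y \<noteq> m" using D_sub y by auto
  have xm: "x \<noteq> m"
  proof
    assume "x = m"
    then have "\<not> lessP le m y" using m_top yV by blast
    then show False using x yV \<open>x = m\<close> unfolding lessP_def by blast
  qed
  show ?thesis
  proof (cases "le y l")
    case True
    moreover have "l \<in> V" using l Lam_sub by blast
    ultimately have "le x l" using trans[of x y l] x yV by blast
    then show ?thesis using x xm unfolding D_def by blast
  next
    case False
    then have yN: "y \<in> NN" "tgt y = l" using y unfolding D_def by auto
    show ?thesis
    proof (cases "x = y")
      case True then show ?thesis using y by simp
    next
      case False
      then have "lessP le x y" using x unfolding lessP_def by blast
      then have "x \<in> mins" using NN_below yN x by blast
      then have "le x l" using tgt2[OF yN(1) _ x(2)] yN by blast
      then show ?thesis using x xm unfolding D_def by blast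
    qed
  qed
qed

lemma D_self: "l \<in> Lam \<Longrightarrow> l \<in> D l" using Lam_sub refl unfolding D_def by blast

lemma D_hub:
  assumes "h \<in> hubs" "l \<in> Lam" "h \<in> D l" shows "h = l"
proof (rule ccontr)
  assume ne: "h \<noteq> l"
  have "h \<notin> NN" using assms unfolding NN_def by blast
  then have "le h l" using assms unfolding D_def by blast
  then have "lessP le h l" using ne unfolding lessP_def by blast
  moreover have "l \<in> V" "l \<noteq> m" using Lam_sub assms by auto
  ultimately have "h \<in> mins" using below_min assms hubs_sub by blast
  then show False using assms unfolding hubs_def by blast
qed

lemma D_min: assumes "a \<in> mins" shows "a \<in> D l \<longleftrightarrow> le a l"
proof -
  have "a \<notin> NN" "a \<in> V" "a \<noteq> m" using assms mins_sub m_notmin unfolding NN_def by auto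
  then show ?thesis unfolding D_def by blast
qed

lemma D_NN: assumes "x \<in> NN" "l \<in> Lam" shows "x \<in> D l \<longleftrightarrow> tgt x = l"
proof -
  have "\<not> le x l"
  proof
    assume "le x l"
    moreover have "x \<noteq> l" using NN_Lam assms by blast
    ultimately have "lessP le x l" unfolding lessP_def by blast
    then have "l = m" using NN_above assms Lam_sub by blast
    then show False using Lam_sub assms by blast
  qed
  then show ?thesis using assms unfolding D_def by blast
qed

lemma parts: "x \<in> V \<Longrightarrow> x \<noteq> m \<Longrightarrow> x \<in> mins \<or> x \<in> hubs \<or> x \<in> NN"
  unfolding NN_def by blast

lemma cover: assumes "x \<in> V" "x \<noteq> m" shows "\<exists>l\<in>Lam. x \<in> D l"
proof -
  consider "x \<in> mins" | "x \<in> hubs" | "x \<in> NN" using parts assms by blast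
  then show ?thesis
  proof cases
    case 1 then show ?thesis using Lam_cover_min D_min by blast
  next
    case 2 then have "x \<in> Lam" unfolding Lam_def by blast
    then show ?thesis using D_self by blast
  next
    case 3 then show ?thesis using tgt1 D_NN by blast
  qed
qed

lemma reflU: assumes "p \<in> U" shows "leU p p"
  using assms
proof (cases rule: U_E)
  case (o x) then show ?thesis using refl by simp
next
  case (c l) then show ?thesis by simp
qed

lemma antisymU: assumes "p \<in> U" "q \<in> U" "leU p q" "leU q p" shows "p = q"
  using assms(1)
proof (cases rule: U_E)
  case (o a) note a = this
  from assms(2) show ?thesis
  proof (cases rule: U_E)
    case (o b)
    then have "le a b" "le b a" using a assms(3,4) by simp_all
    then show ?thesis using a o antisym[of a b] by simp
  next
    case (c l) then show ?thesis using a assms(4) by simp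
  qed
next
  case (c l) note a = this
  from assms(2) show ?thesis
  proof (cases rule: U_E)
    case (o b) then show ?thesis using a assms(3) by simp
  next
    case (c l') then show ?thesis using a assms(3) by simp
  qed
qed

lemma transU: assumes "p \<in> U" "q \<in> U" "r \<in> U" "leU p q" "leU q r" shows "leU p r"
  using assms(1)
proof (cases rule: U_E)
  case (o a) note a = this
  from assms(2) show ?thesis
  proof (cases rule: U_E)
    case (o b) note b = this
    from assms(3) show ?thesis
    proof (cases rule: U_E)
      case (o c)
      then have "le a b" "le b c" using a b assms(4,5) by simp_all
      then show ?thesis using a b o trans[of a b c] by simp
    next
      case (c l)
      then have "le a b" "b \<in> D l" using a b assms(4,5) by simp_all
      then show ?thesis using a b c D_down[of b l a] by simp
    qed
  next
    case (c l) note b = this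
    from assms(3) show ?thesis
    proof (cases rule: U_E)
      case (o c) then show ?thesis using b assms(5) by simp
    next
      case (c l') then show ?thesis using a b assms(4,5) by simp
    qed
  qed
next
  case (c l) note a = this
  from assms(2) show ?thesis
  proof (cases rule: U_E)
    case (o b) then show ?thesis using a assms(4) by simp
  next
    case (c l') then show ?thesis using a assms(4,5) by simp
  qed
qed

lemma posetU: "poset U leU"
  unfolding poset_def using reflU antisymU transU by blast

end



context Uset begin

lemma phi_simps[simp]: "phi (x, 0) = x" "phi (l, 1) = m" "phi (l, Suc 0) = m"
  unfolding phi_def by auto

lemma below_o:
  assumes "q \<in> U" "leU q (x, 0)" obtains y where "q = (y, 0)" "le y x"
  using assms(1)
proof (cases rule: U_E)
  case (o y) then show ?thesis using that assms(2) by simp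
next
  case (c l) then show ?thesis using assms(2) by simp
qed

lemma above_c:
  assumes "q \<in> U" "leU (l, 1) q" shows "q = (l, 1)"
  using assms(1)
proof (cases rule: U_E)
  case (o y) then show ?thesis using assms(2) by simp
next
  case (c l') then show ?thesis using assms(2) by simp
qed

lemma maxsetU: "maxset U leU = M"
proof
  show "maxset U leU \<subseteq> M"
  proof
    fix p assume p: "p \<in> maxset U leU"
    then have pU: "p \<in> U" unfolding maxset_def by blast
    from pU show "p \<in> M"
    proof (cases rule: U_E)
      case (o x)
      then obtain l where l: "l \<in> Lam" "x \<in> D l" using cover by blast
      then have "(l, 1) \<in> U" "lessP leU p (l, 1)" using o U_c by auto
      then show ?thesis using p unfolding maxset_def by blast
    next
      case (c l) then show ?thesis unfolding M_def by blast
    qed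
  qed
  show "M \<subseteq> maxset U leU"
  proof
    fix p assume "p \<in> M"
    then obtain l where l: "p = (l, 1)" "l \<in> Lam" unfolding M_def by blast
    have "\<not> lessP leU p q" if "q \<in> U" for q
      using that by (cases rule: U_E) (use l in simp_all)
    then show "p \<in> maxset U leU" using l U_c unfolding maxset_def by blast
  qed
qed

lemma minsetU: "minset U leU = (\<lambda>a. (a, 0::nat)) ` mins"
proof
  show "minset U leU \<subseteq> (\<lambda>a. (a, 0::nat)) ` mins"
  proof
    fix p assume p: "p \<in> minset U leU"
    then have pU: "p \<in> U" and nl: "\<And>q. q \<in> U \<Longrightarrow> \<not> lessP leU q p" unfolding minset_def by blast+
    from pU show "p \<in> (\<lambda>a. (a, 0::nat)) ` mins"
    proof (cases rule: U_E)
      case (o x)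
      have "x \<in> mins"
      proof (rule ccontr)
        assume "x \<notin> mins"
        then obtain v where v: "v \<in> V" "lessP le v x" using notminsD o by blast
        have "v \<noteq> m" using m_top o v by blast
        then have "(v, 0) \<in> U" using v U_o by blast
        then show False using nl[of "(v,0)"] v o by simp
      qed
      then show ?thesis using o by blast
    next
      case (c l)
      have "(l, 0) \<in> U" using c Lam_sub U_o by blast
      moreover have "lessP leU (l, 0) p" using c D_self by simp
      ultimately show ?thesis using nl by blast
    qed
  qed
  show "(\<lambda>a. (a, 0::nat)) ` mins \<subseteq> minset U leU"
  proof
    fix p assume "p \<in> (\<lambda>a. (a, 0::nat)) ` mins"
    then obtain a where a: "p = (a, 0)" "a \<in> mins" by blast
    have aU: "p \<in> U" using a mins_sub m_notmin U_o by blast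
    have "\<not> lessP leU q p" if qU: "q \<in> U" for q
    proof
      assume "lessP leU q p"
      then have lq: "leU q (a, 0)" "q \<noteq> (a,0)" using a unfolding lessP_def by auto
      obtain y where y: "q = (y, 0)" "le y a" using below_o[OF qU lq(1)] by blast
      have "y \<in> V" using qU y U_o_iff by blast
      then have "y = a" using minsD[OF a(2)] y by blast
      then show False using lq y by simp
    qed
    then show "p \<in> minset U leU" using aU unfolding minset_def by blast
  qed
qed

lemma phi_mono: assumes "p \<in> U" "q \<in> U" "leU p q" shows "le (phi p) (phi q)"
  using assms(1)
proof (cases rule: U_E)
  case (o x) note a = this
  from assms(2) show ?thesis
  proof (cases rule: U_E)
    case (o y) then show ?thesis using a assms(3) by simp
  next
    case (c l) then show ?thesis using a le_m by simp
  qed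
next
  case (c l) note a = this
  from assms(2) show ?thesis
  proof (cases rule: U_E)
    case (o y) then show ?thesis using a assms(3) by simp
  next
    case (c l') then show ?thesis using a refl mV by simp
  qed
qed

lemma phi_inj_pair:
  assumes "p \<in> U" "q \<in> U" "leU p q \<or> leU q p" "phi p = phi q" shows "p = q"
  using assms(1)
proof (cases rule: U_E)
  case (o x) note a = this
  from assms(2) show ?thesis
  proof (cases rule: U_E)
    case (o y) then show ?thesis using a assms(4) by simp
  next
    case (c l) then show ?thesis using a assms(4) by simp
  qed
next
  case (c l) note a = this
  from assms(2) show ?thesis
  proof (cases rule: U_E)
    case (o y) then show ?thesis using a assms(4) by simp
  next
    case (c l') then show ?thesis using a assms(3) by auto
  qed
qed

lemma dimU: "dimP leU U \<le> 2"
proof -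
  have "dimP leU U \<le> dimP le V"
  proof (rule dim_mono_map[where f = phi])
    fix C assume C: "C \<subseteq> U" "is_chainP leU C"
    show "inj_on phi C \<and> is_chainP le (phi ` C)"
    proof
      show "inj_on phi C" unfolding inj_on_def
        using C phi_inj_pair unfolding is_chainP_def by blast
      show "is_chainP le (phi ` C)" unfolding is_chainP_def
        using C phi_mono unfolding is_chainP_def by blast
    qed
  next
    show "phi ` U \<subseteq> V"
    proof
      fix v assume "v \<in> phi ` U"
      then obtain p where p: "p \<in> U" "v = phi p" by blast
      from p(1) show "v \<in> V" by (cases rule: U_E) (use p mV in simp_all)
    qed
  qed
  then show ?thesis using dim2 by (rule order_trans)
qed

lemma HsetU2: "Hset U leU 2 \<subseteq> M"
proof
  fix p assume "p \<in> Hset U leU 2"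
  then have pU: "p \<in> U" and h: "height U leU p = enat 2" unfolding Hset_def by auto
  then have "enat 1 < height U leU p" by simp
  then obtain v w where vw: "v \<in> U" "w \<in> U" "lessP leU w v" "lessP leU v p"
    using height_gt1_iff[OF posetU pU] by blast
  from pU show "p \<in> M"
  proof (cases rule: U_E)
    case (o x)
    obtain y where y: "v = (y, 0)" "le y x" using below_o[OF vw(1)] vw(4) o unfolding lessP_def by blast
    obtain z where z: "w = (z, 0)" "le z y" using below_o[OF vw(2)] vw(3) y unfolding lessP_def by blast
    have yV: "y \<in> V" "z \<in> V" using vw y z U_o_iff by auto
    have "lessP le y x" "lessP le z y" using vw(3,4) o y z by simp_all
    then have "y \<in> mins" using below_min yV o by blast
    then show ?thesis using minsD[of y z] yV \<open>lessP le z y\<close> unfolding lessP_def by blast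
  next
    case (c l) then show ?thesis unfolding M_def by blast
  qed
qed

lemma mubU:
  assumes a: "a \<in> mins" and b: "b \<in> mins" and ab: "a \<noteq> b"
  shows "finite (mub U leU {(a, 0), (b, 0)})"
proof -
  have "finite (mub V le {a, b})" using Kc(5) a b ab unfolding mins_def by blast
  moreover have "finite M" using Lam_fin unfolding M_def by blast
  moreover have "mub U leU {(a, 0), (b, 0)} \<subseteq> (\<lambda>x. (x, 0::nat)) ` mub V le {a, b} \<union> M"
  proof
    fix p assume p: "p \<in> mub U leU {(a, 0), (b, 0)}"
    then have pU: "p \<in> U" and ub: "leU (a,0) p" "leU (b,0) p"
      and mn: "\<And>w. w \<in> U \<Longrightarrow> leU (a,0) w \<Longrightarrow> leU (b,0) w \<Longrightarrow> \<not> lessP leU w p"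
      unfolding mub_def by auto
    from pU show "p \<in> (\<lambda>x. (x, 0::nat)) ` mub V le {a, b} \<union> M"
    proof (cases rule: U_E)
      case (o x)
      have "x \<in> mub V le {a, b}" unfolding mub_def
      proof (intro CollectI conjI)
        show "x \<in> V" using o by simp
        show "\<forall>c\<in>{a, b}. le c x" using ub o by simp
        show "\<not> (\<exists>w\<in>V. (\<forall>c\<in>{a, b}. le c w) \<and> lessP le w x)"
        proof
          assume "\<exists>w\<in>V. (\<forall>c\<in>{a, b}. le c w) \<and> lessP le w x"
          then obtain w where w: "w \<in> V" "le a w" "le b w" "lessP le w x" by blast
          have "w \<noteq> m" using m_top o w by blast
          then have "(w, 0) \<in> U" using w U_o by blast
          then show False using mn[of "(w,0)"] w o by simp
        qed
      qed
      then show ?thesis using o by blast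
    next
      case (c l) then show ?thesis unfolding M_def by blast
    qed
  qed
  ultimately show ?thesis by (meson finite_Un finite_imageI finite_subset)
qed

end



context Uset begin

lemma bracketU:
  assumes l: "l \<in> Lam" and z: "z \<in> mins"
  shows "bracket U leU (l, 1) (z, 0) = (\<lambda>x. (x, 0::nat)) ` {x\<in>S z. tgt x = l}"
proof
  show "bracket U leU (l, 1) (z, 0) \<subseteq> (\<lambda>x. (x, 0::nat)) ` {x\<in>S z. tgt x = l}"
  proof
    fix p assume "p \<in> bracket U leU (l, 1) (z, 0)"
    then have pU: "p \<in> U" and G: "Gset U leU p - {p} = {(l, 1)}"
      and L: "Lset U leU p - {p} = {(z, 0)}" unfolding bracket_def by auto
    have g1: "(l, 1) \<in> Gset U leU p - {p}" using G by simp
    then have lp: "leU p (l, 1)" "p \<noteq> (l, 1)" unfolding Gset_def by auto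
    have "(z, 0) \<in> Lset U leU p - {p}" using L by simp
    then have zp: "leU (z, 0) p" "p \<noteq> (z, 0)" unfolding Lset_def by auto
    from pU show "p \<in> (\<lambda>x. (x, 0::nat)) ` {x\<in>S z. tgt x = l}"
    proof (cases rule: U_E)
      case (c l') then show ?thesis using lp by simp
    next
      case (o x)
      have zx: "le z x" "z \<noteq> x" using zp o by auto
      have xn: "x \<notin> mins" using minsD[of x z] zx z mins_sub by blast
      have xh: "x \<notin> hubs"
      proof
        assume "x \<in> hubs"
        then obtain a b where ab: "a \<in> mins" "b \<in> mins" "a \<noteq> b" "le a x" "le b x" unfolding hubs_def by blast
        have "a \<noteq> x" "b \<noteq> x" using ab xn by auto
        moreover have "(a, 0) \<in> U" "(b, 0) \<in> U" using ab mins_sub m_notmin U_o by auto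
        ultimately have "(a, 0) \<in> Lset U leU p - {p}" "(b, 0) \<in> Lset U leU p - {p}"
          using ab o unfolding Lset_def by auto
        then have "(a, 0) \<in> {(z, 0::nat)}" "(b, 0) \<in> {(z, 0::nat)}" using L by simp_all
        then show False using ab(3) by simp
      qed
      have xN: "x \<in> NN" using o xn xh unfolding NN_def by blast
      have "(tgt x, 1) \<in> U" using tgt1[OF xN] U_c by blast
      moreover have "leU p (tgt x, 1)" using o D_NN[OF xN tgt1[OF xN]] by simp
      ultimately have "(tgt x, 1) \<in> Gset U leU p - {p}" using o unfolding Gset_def by auto
      then have "tgt x = l" using G by simp
      moreover have "x \<in> S z" using xN zx unfolding S_def by blast
      ultimately show ?thesis using o by blast
    qed
  qed
  show "(\<lambda>x. (x, 0::nat)) ` {x\<in>S z. tgt x = l} \<subseteq> bracket U leU (l, 1) (z, 0)"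
  proof
    fix p assume "p \<in> (\<lambda>x. (x, 0::nat)) ` {x\<in>S z. tgt x = l}"
    then obtain x where x: "p = (x, 0)" "x \<in> S z" "tgt x = l" by blast
    have xN: "x \<in> NN" "le z x" using x unfolding S_def by auto
    have xV: "x \<in> V" "x \<noteq> m" "x \<notin> mins" using xN unfolding NN_def by auto
    have pU: "p \<in> U" using x xV U_o by blast
    have "Gset U leU p - {p} = {(l, 1)}"
    proof
      show "Gset U leU p - {p} \<subseteq> {(l, 1)}"
      proof
        fix q assume "q \<in> Gset U leU p - {p}"
        then have qU: "q \<in> U" and q: "leU p q" "q \<noteq> p" unfolding Gset_def by auto
        from qU show "q \<in> {(l, 1)}"
        proof (cases rule: U_E)
          case (o y)
          then have "lessP le x y" using q x unfolding lessP_def by auto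
          then have "y = m" using NN_above[OF xN(1)] o by blast
          then show ?thesis using o by simp
        next
          case (c l')
          then have "tgt x = l'" using q x D_NN[OF xN(1)] by simp
          then show ?thesis using c x by simp
        qed
      qed
      have "(l, 1) \<in> U" using l U_c by blast
      moreover have "leU p (l, 1)" using x D_NN[OF xN(1) l] by simp
      ultimately show "{(l, 1)} \<subseteq> Gset U leU p - {p}" using x unfolding Gset_def by auto
    qed
    moreover have "Lset U leU p - {p} = {(z, 0)}"
    proof
      show "Lset U leU p - {p} \<subseteq> {(z, 0)}"
      proof
        fix q assume "q \<in> Lset U leU p - {p}"
        then have qU: "q \<in> U" and q: "leU q p" "q \<noteq> p" unfolding Lset_def by auto
        obtain y where y: "q = (y, 0)" "le y x" using below_o[OF qU] q x by blast
        have yV: "y \<in> V" using qU y U_o_iff by blast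
        have "lessP le y x" using y q x unfolding lessP_def by auto
        then have "y \<in> mins" using NN_below[OF xN(1) yV] by blast
        then have "y = z" using NN_unique[OF xN(1) _ z] y xN by blast
        then show "q \<in> {(z, 0)}" using y by simp
      qed
      have "z \<noteq> x" using xV z by blast
      moreover have "(z, 0) \<in> U" using z mins_sub m_notmin U_o by blast
      ultimately show "{(z, 0)} \<subseteq> Lset U leU p - {p}" using x xN unfolding Lset_def by auto
    qed
    ultimately show "p \<in> bracket U leU (l, 1) (z, 0)" using pU unfolding bracket_def by blast
  qed
qed

lemma piece_inf:
  assumes l: "l \<in> Lam" and z: "z \<in> mins" and ne: "{x\<in>S z. tgt x = l} \<noteq> {}"
  shows "infinite {x\<in>S z. tgt x = l}" "{x\<in>S z. tgt x = l} \<approx> V"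
proof -
  obtain x where x: "x \<in> S z" "tgt x = l" using ne by blast
  have xN: "x \<in> NN" "le z x" using x unfolding S_def by auto
  have zl: "le z l" using tgt2[OF xN(1) z xN(2)] x by simp
  have Sne: "S z \<noteq> {}" using x by blast
  have e: "{x\<in>S z. tgt x = l} \<approx> S z" using tgt3[OF z l zl Sne] .
  then show "infinite {x\<in>S z. tgt x = l}" using S_inf(1)[OF z Sne] eqpoll_finite_iff by blast
  show "{x\<in>S z. tgt x = l} \<approx> V" using eqpoll_trans[OF e S_inf(2)[OF z Sne]] .
qed

lemma U_eqpoll_V: assumes "infinite V" shows "U \<approx> V"
proof -
  let ?A = "(\<lambda>x. (x, 0::nat)) ` (V - {m})"
  have inj: "inj_on (\<lambda>x. (x, 0::nat)) (V - {m})" by (auto simp: inj_on_def)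
  have iVm: "infinite (V - {m})" using assms by simp
  then have iA: "infinite ?A" using finite_imageD[OF _ inj] by blast
  have "U = ?A \<union> M" unfolding U_def M_def by simp
  moreover have "?A \<union> M \<approx> ?A" using infinite_Un_finite_eqpoll[OF iA] Lam_fin unfolding M_def by blast
  moreover have "?A \<approx> V - {m}" using inj_on_image_eqpoll_self[OF inj] .
  moreover have "V - {m} \<approx> V"
  proof -
    have "insert m (V - {m}) \<approx> V - {m}" using infinite_insert_eqpoll[OF iVm] .
    moreover have "insert m (V - {m}) = V" using mV by blast
    ultimately show ?thesis using eqpoll_sym by simp
  qed
  ultimately show ?thesis using eqpoll_trans by metis
qed

lemma bracket_inf:
  assumes uU: "u \<in> U" and vU: "v \<in> U" and wU: "w \<in> U" and vu: "lessP leU v u" and wv: "lessP leU w v"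
  shows "infinite (bracket U leU u w)"
  using uU
proof (cases rule: U_E)
  case (o x)
  obtain y where y: "v = (y, 0)" "le y x" using below_o[OF vU] vu o unfolding lessP_def by blast
  obtain z where z: "w = (z, 0)" "le z y" using below_o[OF wU] wv y unfolding lessP_def by blast
  have yV: "y \<in> V" "z \<in> V" using vU wU y z U_o_iff by auto
  have "lessP le y x" "lessP le z y" using vu wv o y z by simp_all
  then have "y \<in> mins" using below_min yV o by blast
  then show ?thesis using minsD[of y z] yV \<open>lessP le z y\<close> unfolding lessP_def by blast
next
  case (c l)
  from vU show ?thesis
  proof (cases rule: U_E)
    case (c l') then show ?thesis using vu \<open>u = (l,1)\<close> by simp
  next
    case (o y)
    have yD: "y \<in> D l" using vu o c by simp
    obtain z where z: "w = (z, 0)" "le z y" using below_o[OF wU] wv o unfolding lessP_def by blast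
    have zV: "z \<in> V" using wU z U_o_iff by blast
    have zy: "lessP le z y" using wv o z by simp
    have zm: "z \<in> mins" using below_min[OF zV _ zy] o by blast
    have zl: "le z l" using D_down[OF yD zV _ c(2)] zy D_min[OF zm] unfolding lessP_def by blast
    have yn: "y \<notin> mins" using minsD[of y z] zy zV unfolding lessP_def by blast
    have Sne: "S z \<noteq> {}"
    proof (cases "y \<in> hubs")
      case True
      then have "y = l" using D_hub c(2) yD by blast
      have "lessP le y m" using le_m o unfolding lessP_def by blast
      then have "infinite (bracket V le m z)" using Kc(6) mV o zV zy by blast
      then show ?thesis using S_bracket[OF zm] by auto
    next
      case False
      then have "y \<in> NN" using o yn unfolding NN_def by blast
      then show ?thesis using z unfolding S_def by blast
    qed
    have e: "{x\<in>S z. tgt x = l} \<approx> S z" using tgt3[OF zm c(2) zl Sne] .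
    then have "infinite {x\<in>S z. tgt x = l}" using S_inf(1)[OF zm Sne] eqpoll_finite_iff by blast
    moreover have "inj_on (\<lambda>x. (x, 0::nat)) {x\<in>S z. tgt x = l}" by (auto simp: inj_on_def)
    ultimately have "infinite ((\<lambda>x. (x, 0::nat)) ` {x\<in>S z. tgt x = l})" using finite_imageD by blast
    then show ?thesis using bracketU[OF c(2) zm] c z by simp
  qed
qed

lemma K_posetU: "K_poset U leU"
  unfolding K_poset_def
proof (intro conjI)
  show "poset U leU" by (rule posetU)
  show "dimP leU U \<le> 2" by (rule dimU)
  show "finite (minset U leU)" unfolding minsetU using fin_mins by blast
  show "finite (Hset U leU 2)" using HsetU2 Lam_fin unfolding M_def by (meson finite_imageI finite_subset)
  show "\<forall>u\<in>minset U leU. \<forall>v\<in>minset U leU. u \<noteq> v \<longrightarrow> finite (mub U leU {u, v})"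
    unfolding minsetU using mubU by blast
  show "\<forall>u\<in>U. \<forall>v\<in>U. \<forall>w\<in>U. lessP leU v u \<and> lessP leU w v \<longrightarrow> infinite (bracket U leU u w)"
    using bracket_inf by blast
qed

lemma properU: "proper U leU"
  unfolding proper_def
proof (intro ballI)
  fix u w assume u: "u \<in> maxset U leU" and w: "w \<in> minset U leU"
  obtain l where l: "u = (l, 1)" "l \<in> Lam" using u unfolding maxsetU M_def by blast
  obtain z where z: "w = (z, 0)" "z \<in> mins" using w unfolding minsetU by blast
  have b: "bracket U leU u w = (\<lambda>x. (x, 0::nat)) ` {x\<in>S z. tgt x = l}" using bracketU[OF l(2) z(2)] l z by simp
  show "bracket U leU u w = {} \<or> bracket U leU u w \<approx> U"
  proof (cases "{x\<in>S z. tgt x = l} = {}")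
    case True then show ?thesis using b by simp
  next
    case False
    have iP: "infinite {x\<in>S z. tgt x = l}" and eP: "{x\<in>S z. tgt x = l} \<approx> V"
      using piece_inf[OF l(2) z(2) False] by auto
    have "{x\<in>S z. tgt x = l} \<subseteq> V" unfolding S_def NN_def by blast
    then have iV: "infinite V" using iP finite_subset by blast
    have inj: "inj_on (\<lambda>x. (x, 0::nat)) {x\<in>S z. tgt x = l}" by (auto simp: inj_on_def)
    have "bracket U leU u w \<approx> {x\<in>S z. tgt x = l}" using inj_on_image_eqpoll_self[OF inj] b by simp
    then have "bracket U leU u w \<approx> V" using eP eqpoll_trans by blast
    then have "bracket U leU u w \<approx> U" using eqpoll_trans eqpoll_sym[OF U_eqpoll_V[OF iV]] by blast
    then show ?thesis by blast
  qed
qed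

end



context Uset begin

lemma splittingU: "splitting_with U leU V le m phi M"
  unfolding splitting_with_def
proof (intro conjI)
  show "m \<in> maxset V le" using mx by simp
  show "height V le m > 0" using height_pos_iff[OF po mV] notminsD[OF mV m_notmin] by blast
  show "finite M" using Lam_fin unfolding M_def by blast
  show "M \<noteq> {}" using Lam_ne unfolding M_def by blast
  show "M \<subseteq> maxset U leU" using maxsetU by simp
  show "\<forall>x\<in>M. height U leU x > 0"
  proof
    fix p assume "p \<in> M"
    then obtain l where l: "p = (l, 1)" "l \<in> Lam" unfolding M_def by blast
    have "(l, 0) \<in> U" using l Lam_sub U_o by blast
    moreover have "lessP leU (l, 0) p" using l D_self by simp
    moreover have "p \<in> U" using l U_c by blast
    ultimately show "height U leU p > 0" using height_pos_iff[OF posetU] by blast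
  qed
  show "phi ` U = V"
  proof
    show "phi ` U \<subseteq> V"
    proof
      fix v assume "v \<in> phi ` U"
      then obtain p where p: "p \<in> U" "v = phi p" by blast
      from p(1) show "v \<in> V" by (cases rule: U_E) (use p mV in simp_all)
    qed
    show "V \<subseteq> phi ` U"
    proof
      fix v assume v: "v \<in> V"
      show "v \<in> phi ` U"
      proof (cases "v = m")
        case True
        obtain l where "l \<in> Lam" using Lam_ne by blast
        then have "(l, 1) \<in> U" "phi (l, 1) = v" using True U_c by auto
        then show ?thesis by (metis image_eqI)
      next
        case False
        then have "(v, 0) \<in> U" "phi (v, 0) = v" using v U_o by auto
        then show ?thesis by (metis image_eqI)
      qed
    qed
  qed
  show "\<forall>x\<in>U. \<forall>y\<in>U. leU x y \<longrightarrow> le (phi x) (phi y)" using phi_mono by blast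
  show "{x\<in>U. phi x = m} = M"
  proof
    show "{x\<in>U. phi x = m} \<subseteq> M"
    proof
      fix p assume "p \<in> {x\<in>U. phi x = m}"
      then have p: "p \<in> U" "phi p = m" by auto
      from p(1) show "p \<in> M"
      proof (cases rule: U_E)
        case (o x) then show ?thesis using p by simp
      next
        case (c l) then show ?thesis unfolding M_def by blast
      qed
    qed
    show "M \<subseteq> {x\<in>U. phi x = m}" unfolding M_def using U_c by auto
  qed
  show "\<forall>v\<in>V. v \<noteq> m \<longrightarrow> card {x\<in>U. phi x = v} = 1"
  proof (intro ballI impI)
    fix v assume v: "v \<in> V" "v \<noteq> m"
    have "{x\<in>U. phi x = v} = {(v, 0)}"
    proof
      show "{x\<in>U. phi x = v} \<subseteq> {(v, 0)}"
      proof
        fix p assume "p \<in> {x\<in>U. phi x = v}"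
        then have p: "p \<in> U" "phi p = v" by auto
        from p(1) show "p \<in> {(v, 0)}"
        proof (cases rule: U_E)
          case (o x) then show ?thesis using p by simp
        next
          case (c l) then show ?thesis using p v by simp
        qed
      qed
      show "{(v, 0)} \<subseteq> {x\<in>U. phi x = v}" using v U_o by auto
    qed
    then show "card {x\<in>U. phi x = v} = 1" by simp
  qed
  show "\<forall>x'\<in>U. \<forall>y\<in>V. le (phi x') y \<longrightarrow> (\<exists>y'\<in>U. leU x' y' \<and> phi y' = y)"
  proof (intro ballI impI)
    fix p y assume p: "p \<in> U" and y: "y \<in> V" and le: "le (phi p) y"
    from p show "\<exists>y'\<in>U. leU p y' \<and> phi y' = y"
    proof (cases rule: U_E)
      case (o x)
      show ?thesis
      proof (cases "y = m")
        case True
        obtain l where l: "l \<in> Lam" "x \<in> D l" using cover o by blast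
        then have "(l, 1) \<in> U" "leU p (l, 1)" "phi (l, 1) = y" using o True U_c by auto
        then show ?thesis by blast
      next
        case False
        then have "(y, 0) \<in> U" "leU p (y, 0)" "phi (y, 0) = y" using o le y U_o by auto
        then show ?thesis by blast
      qed
    next
      case (c l)
      have "le m y" using le c by simp
      then have "y = m" using m_top[OF y] unfolding lessP_def by blast
      have "leU p p \<and> phi p = y" using reflU[OF p] c \<open>y = m\<close> by simp
      then show ?thesis using p by blast
    qed
  qed
qed

lemma dvalU: assumes "p \<in> M" shows "dval (Lset U leU p) leU p = 1"
proof -
  obtain l where l: "p = (l, 1)" "l \<in> Lam" using assms unfolding M_def by blast
  define W where "W = Lset U leU (l, 1)"
  have lV: "l \<in> V" "l \<noteq> m" using l Lam_sub by auto
  have Wsub: "W \<subseteq> U" unfolding W_def Lset_def by blast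
  have poW: "poset W leU" using poset_subset[OF posetU Wsub] .
  have Wo: "(x, 0) \<in> W \<longleftrightarrow> x \<in> D l" for x
    unfolding W_def Lset_def using D_sub U_o_iff by auto
  have Wc: "(l, 1) \<in> W" unfolding W_def Lset_def using l U_c by simp
  have WE: "q \<in> W \<Longrightarrow> q = (l, 1) \<or> (\<exists>x. q = (x, 0) \<and> x \<in> D l)" for q
  proof -
    assume q: "q \<in> W"
    then have qU: "q \<in> U" using Wsub by blast
    from qU show ?thesis
    proof (cases rule: U_E)
      case (o x) then show ?thesis using q Wo by auto
    next
      case (c l')
      then have "leU (l', 1) (l, 1)" using q unfolding W_def Lset_def by auto
      then show ?thesis using c by simp
    qed
  qed
  have lW: "(l, 0) \<in> W" using Wo D_self l by blast
  have minU: "\<not> lessP leU q (a, 0)" if "a \<in> mins" "q \<in> U" for a q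
    using that minsetU unfolding minset_def by blast
  have minsetW: "minset W leU = (\<lambda>a. (a, 0::nat)) ` {a\<in>mins. le a l}"
  proof
    show "minset W leU \<subseteq> (\<lambda>a. (a, 0::nat)) ` {a\<in>mins. le a l}"
    proof
      fix v assume v: "v \<in> minset W leU"
      then have vW: "v \<in> W" and nl: "\<And>q. q \<in> W \<Longrightarrow> \<not> lessP leU q v" unfolding minset_def by blast+
      from WE[OF vW] show "v \<in> (\<lambda>a. (a, 0::nat)) ` {a\<in>mins. le a l}"
      proof
        assume "v = (l, 1)"
        then show ?thesis using nl[OF lW] D_self l by simp
      next
        assume "\<exists>x. v = (x, 0) \<and> x \<in> D l"
        then obtain x where x: "v = (x, 0)" "x \<in> D l" by blast
        have xm: "x \<in> mins"
        proof (rule ccontr)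
          assume "x \<notin> mins"
          then obtain y where y: "y \<in> V" "lessP le y x" using notminsD D_sub x by blast
          have "y \<in> D l" using D_down[OF x(2) y(1) _ l(2)] y unfolding lessP_def by blast
          then have "(y, 0) \<in> W" using Wo by blast
          then show False using nl[of "(y, 0)"] x y by simp
        qed
        then have "le x l" using D_min x by blast
        then show ?thesis using x xm by blast
      qed
    qed
    show "(\<lambda>a. (a, 0::nat)) ` {a\<in>mins. le a l} \<subseteq> minset W leU"
    proof
      fix v assume "v \<in> (\<lambda>a. (a, 0::nat)) ` {a\<in>mins. le a l}"
      then obtain a where a: "v = (a, 0)" "a \<in> mins" "le a l" by blast
      have "v \<in> W" using a Wo D_min by blast
      moreover have "\<not> lessP leU q v" if "q \<in> W" for q using minU[OF a(2)] that Wsub a by blast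
      ultimately show "v \<in> minset W leU" unfolding minset_def by blast
    qed
  qed
  have C1: "(a, 0) \<notin> Hset W leU 1" if a: "a \<in> mins" for a
  proof
    assume "(a, 0) \<in> Hset W leU 1"
    then have aW: "(a, 0) \<in> W" and h: "height W leU (a, 0) = enat 1" unfolding Hset_def by auto
    have "height W leU (a, 0) = 0" using height0_iff[OF poW aW] minU[OF a] Wsub by blast
    then show False using h by (simp add: zero_enat_def)
  qed
  have C2: "(l, 0) \<in> Hset W leU 1" if hub: "l \<in> hubs"
  proof -
    obtain a where a: "a \<in> mins" "le a l" using hub unfolding hubs_def by blast
    have "a \<noteq> l" using hub a unfolding hubs_def by blast
    then have "lessP leU (a, 0) (l, 0)" using a unfolding lessP_def by simp
    moreover have "(a, 0) \<in> W" using a Wo D_min by blast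
    moreover have "\<not> (\<exists>v\<in>W. \<exists>w\<in>W. lessP leU w v \<and> lessP leU v (l, 0))"
    proof
      assume "\<exists>v\<in>W. \<exists>w\<in>W. lessP leU w v \<and> lessP leU v (l, 0)"
      then obtain v w where vw: "v \<in> W" "w \<in> W" "lessP leU w v" "lessP leU v (l, 0)" by blast
      have vU: "v \<in> U" "w \<in> U" using vw Wsub by auto
      obtain y where y: "v = (y, 0)" "le y l" using below_o[OF vU(1)] vw(4) unfolding lessP_def by blast
      have yV: "y \<in> V" using vU y U_o_iff by blast
      have "lessP le y l" using vw(4) y by simp
      then have "y \<in> mins" using below_min[OF yV lV(1)] lV by blast
      then show False using minU[of y w] vU vw(3) y by simp
    qed
    ultimately have "height W leU (l, 0) = 1" using height1_iff[OF poW lW] by blast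
    then show ?thesis using lW unfolding Hset_def by (simp add: one_enat_def)
  qed
  let ?CH = "calH W leU - {(l, 1)}"
  have C3: "q \<in> ?CH \<Longrightarrow> q = (l, 0) \<or> (\<exists>a. q = (a, 0) \<and> a \<in> mins \<and> le a l)" for q
  proof -
    assume q: "q \<in> ?CH"
    then have "q \<in> minset W leU \<or> (q \<in> Hset W leU 1 \<and> (\<exists>a\<in>minset W leU. \<exists>b\<in>minset W leU.
      a \<noteq> b \<and> leU a q \<and> leU b q))" unfolding calH_def by blast
    then show "q = (l, 0) \<or> (\<exists>a. q = (a, 0) \<and> a \<in> mins \<and> le a l)"
    proof
      assume "q \<in> minset W leU"
      then show ?thesis unfolding minsetW by blast
    next
      assume h: "q \<in> Hset W leU 1 \<and> (\<exists>a\<in>minset W leU. \<exists>b\<in>minset W leU. a \<noteq> b \<and> leU a q \<and> leU b q)"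
      then have qW: "q \<in> W" unfolding Hset_def by blast
      obtain a b where ab: "a \<in> mins" "b \<in> mins" "a \<noteq> b" "leU (a, 0) q" "leU (b, 0) q"
        using h unfolding minsetW by blast
      from WE[OF qW] show ?thesis
      proof
        assume "q = (l, 1)" then show ?thesis using q by simp
      next
        assume "\<exists>x. q = (x, 0) \<and> x \<in> D l"
        then obtain x where x: "q = (x, 0)" "x \<in> D l" by blast
        have xV: "x \<in> V" "x \<noteq> m" using D_sub x by auto
        have lab: "le a x" "le b x" using ab x by simp_all
        have "x \<notin> mins" using minsD[of x a] minsD[of x b] ab lab mins_sub by blast
        then have "x \<in> hubs" using xV ab lab unfolding hubs_def by blast
        then have "x = l" using D_hub l x by blast
        then show ?thesis using x by simp
      qed
    qed
  qed
  have C4: "(l, 0) \<in> ?CH"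
  proof (cases "l \<in> hubs")
    case True
    obtain a b where ab: "a \<in> mins" "b \<in> mins" "a \<noteq> b" "le a l" "le b l" using True unfolding hubs_def by blast
    have "(a, 0) \<in> minset W leU" "(b, 0) \<in> minset W leU" using ab unfolding minsetW by auto
    moreover have "leU (a, 0) (l, 0)" "leU (b, 0) (l, 0)" using ab by simp_all
    ultimately have "(l, 0) \<in> calH W leU" using C2[OF True] ab(3) unfolding calH_def by blast
    then show ?thesis by simp
  next
    case False
    then have "l \<in> mins" using l unfolding Lam_def by blast
    then have "(l, 0) \<in> minset W leU" using refl lV unfolding minsetW by blast
    then show ?thesis unfolding calH_def by simp
  qed
  have Lam_eq: "LambdaW W leU (l, 1) = {(l, 0)}"
  proof
    show "LambdaW W leU (l, 1) \<subseteq> {(l, 0)}"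
    proof
      fix q assume q: "q \<in> LambdaW W leU (l, 1)"
      then have "q \<in> Hset W leU 1 \<inter> ?CH \<or> (q \<in> ?CH \<and> Gset W leU q \<inter> Hset W leU 1 \<inter> ?CH = {})"
        unfolding LambdaW_def by blast
      then show "q \<in> {(l, 0)}"
      proof
        assume "q \<in> Hset W leU 1 \<inter> ?CH"
        then show ?thesis using C3[of q] C1 by auto
      next
        assume qq: "q \<in> ?CH \<and> Gset W leU q \<inter> Hset W leU 1 \<inter> ?CH = {}"
        from C3[OF conjunct1[OF qq]] show ?thesis
        proof
          assume "q = (l, 0)" then show ?thesis by simp
        next
          assume "\<exists>a. q = (a, 0) \<and> a \<in> mins \<and> le a l"
          then obtain a where a: "q = (a, 0)" "a \<in> mins" "le a l" by blast
          show ?thesis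
          proof (cases "l \<in> hubs")
            case True
            have "(l, 0) \<in> Gset W leU q" using a lW unfolding Gset_def by simp
            then have "(l, 0) \<in> Gset W leU q \<inter> Hset W leU 1 \<inter> ?CH" using C2[OF True] C4 by blast
            then show ?thesis using qq by blast
          next
            case False
            then have "l \<in> mins" using l unfolding Lam_def by blast
            then have "a = l" using minsD a mins_sub by blast
            then show ?thesis using a by simp
          qed
        qed
      qed
    qed
    show "{(l, 0)} \<subseteq> LambdaW W leU (l, 1)"
    proof (cases "l \<in> hubs")
      case True
      then have h: "(l, 0) \<in> Hset W leU 1 \<inter> ?CH" using C2 C4 by blast
      show ?thesis
      proof
        fix q assume "q \<in> {(l, 0::nat)}"
        then have "q = (l, 0)" by simp
        then show "q \<in> LambdaW W leU (l, 1)" unfolding LambdaW_def using h by simp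
      qed
    next
      case False
      then have lm: "l \<in> mins" using l unfolding Lam_def by blast
      have "Hset W leU 1 \<inter> ?CH = {}"
      proof (rule ccontr)
        assume "Hset W leU 1 \<inter> ?CH \<noteq> {}"
        then obtain q where q: "q \<in> Hset W leU 1" "q \<in> ?CH" by blast
        from C3[OF q(2)] show False
        proof
          assume "q = (l, 0)" then show False using C1[OF lm] q by simp
        next
          assume "\<exists>a. q = (a, 0) \<and> a \<in> mins \<and> le a l"
          then show False using C1 q by blast
        qed
      qed
      then have e: "Gset W leU (l, 0) \<inter> Hset W leU 1 \<inter> ?CH = {}" by (simp add: Int_assoc)
      show ?thesis
      proof
        fix q assume "q \<in> {(l, 0::nat)}"
        then have "q = (l, 0)" by simp
        then show "q \<in> LambdaW W leU (l, 1)" unfolding LambdaW_def using e C4 by simp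
      qed
    qed
  qed
  show ?thesis using Lam_eq l unfolding dval_def W_def by (simp add: one_enat_def)
qed

end

lemma main:
  fixes V :: "'a set" and leV :: "'a \<Rightarrow> 'a \<Rightarrow> bool" and m :: 'a
  assumes "K_poset V leV" and "proper V leV"
    and "maxset V leV = {m}" and "dimP leV V \<ge> 1"
  shows "\<exists>(U :: ('a \<times> nat) set) (leU :: 'a \<times> nat \<Rightarrow> 'a \<times> nat \<Rightarrow> bool) \<phi> M.
           K_poset U leU \<and> proper U leU \<and> splitting_with U leU V leV m \<phi> M
           \<and> (\<forall>mi\<in>M. dval (Lset U leU mi) leU mi = 1)"
proof -
  interpret Vset V leV m using assms by unfold_locales
  obtain tgt where t: "\<forall>x\<in>NN. tgt x \<in> Lam \<and> (\<forall>w\<in>mins. leV w x \<longrightarrow> leV w (tgt x))"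
    "\<forall>w\<in>mins. \<forall>l\<in>Lam. leV w l \<longrightarrow> S w \<noteq> {} \<longrightarrow> {x\<in>S w. tgt x = l} \<approx> S w"
    using tgt_exists by blast
  interpret Uset V leV m tgt
    by unfold_locales (use t in blast)+
  have "K_poset U leU \<and> proper U leU \<and> splitting_with U leU V leV m phi M
           \<and> (\<forall>mi\<in>M. dval (Lset U leU mi) leU mi = 1)"
    using K_posetU properU splittingU dvalU by simp
  then show ?thesis by (intro exI[of _ U] exI[of _ leU] exI[of _ phi] exI[of _ M])
qed


theorem theorem4p8:
  fixes V :: "'a set" and leV :: "'a \<Rightarrow> 'a \<Rightarrow> bool" and m :: 'a
  assumes "K_poset V leV" and "proper V leV"
    and "maxset V leV = {m}" and "dimP leV V \<ge> 1"
    and "dval V leV m > 1"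
  shows "\<exists>(U :: ('a \<times> nat) set) (leU :: 'a \<times> nat \<Rightarrow> 'a \<times> nat \<Rightarrow> bool) \<phi> M.
           K_poset U leU \<and> proper U leU \<and> splitting_with U leU V leV m \<phi> M
           \<and> (\<forall>mi\<in>M. dval (Lset U leU mi) leU mi = 1)"
  using main[OF assms(1-4)] .

end
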